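(* For almost all $n$-variable Boolean functions $f$ it holds that for every $k$, $k\text{-}NN(f)>\frac{2^{n/2}}{n}$; that is, the fraction of Boolean functions $f:\{0,1\}^n\to\{0,1\}$ such that $k\text{-}NN(f)>2^{n/2}/n$ for all $k$ tends to $1$ as $n\to\infty$.
   Context: Let $f:\{0,1\}^n\to\{0,1\}$ and $k$ a positive integer. A $k$-nearest neighbor representation of $f$ is a pair of disjoint finite sets $(P,N)$ of points of $\mathbb R^n$ such that for every $a\in\{0,1\}^n$, the $k$ smallest Euclidean distances from $a$ to points of $P\cup N$ are all strictly smaller than the remaining $|P\cup N|-k$ distances, and $f(a)=1$ iff at least $k/2$ of the $k$ points of $P\cup N$ closest to $a$ belong to $P$. The size is $|P\cup N|$, and $k\text{-}NN(f)$ is the minimum size of a $k$-nearest neighbor representation of $f$. *)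

theory Defs
  imports Complex_Main "HOL-Library.FuncSet"
begin

text \<open>Points of R^n are real lists of length n; the Boolean cube {0,1}^n is the set of
  bool lists of length n, embedded in R^n via False = 0, True = 1.\<close>

definition cube :: "nat \<Rightarrow> bool list set" where
  "cube n = {a. length a = n}"

definition embed :: "bool list \<Rightarrow> real list" where
  "embed a = map of_bool a"

definition edist :: "nat \<Rightarrow> real list \<Rightarrow> real list \<Rightarrow> real" where
  "edist n x y = sqrt (\<Sum>i<n. (x ! i - y ! i)\<^sup>2)"

definition knn_rep :: "nat \<Rightarrow> nat \<Rightarrow> (bool list \<Rightarrow> bool) \<Rightarrow> real list set \<Rightarrow> real list set \<Rightarrow> bool" where
  "knn_rep n k f P N \<longleftrightarrow>
     finite P \<and> finite N \<and> P \<inter> N = {} \<and>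
     (\<forall>p \<in> P \<union> N. length p = n) \<and>
     (\<forall>a \<in> cube n. \<exists>K. K \<subseteq> P \<union> N \<and> card K = k \<and>
        (\<forall>p \<in> K. \<forall>q \<in> (P \<union> N) - K. edist n (embed a) p < edist n (embed a) q) \<and>
        (f a \<longleftrightarrow> real (card (K \<inter> P)) \<ge> real k / 2))"

definition knn :: "nat \<Rightarrow> nat \<Rightarrow> (bool list \<Rightarrow> bool) \<Rightarrow> nat" where
  "knn n k f = (LEAST s. \<exists>P N. knn_rep n k f P N \<and> card (P \<union> N) = s)"

end

theory Submission
  imports Defs
begin

lemma cube_finite: "finite (cube n)" and card_cube: "card (cube n) = 2^n"
proof -
  have e: "cube n = {xs. set xs \<subseteq> (UNIV::bool set) \<and> length xs = n}" by (auto simp: cube_def)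
  show "finite (cube n)" unfolding e by (rule finite_lists_length_eq) simp
  show "card (cube n) = 2^n" using card_lists_length_eq[of "UNIV::bool set" n] unfolding e by simp
qed

lemma card_funs: "card (cube n \<rightarrow>\<^sub>E (UNIV :: bool set)) = 2^(2^n)"
  by (simp add: card_PiE cube_finite card_cube)

lemma chow_half:
  fixes A :: "'a set" and phi :: "nat \<Rightarrow> 'a \<Rightarrow> real"
  assumes fin: "finite A"
  and g: "\<forall>a\<in>A. g a = ((\<Sum>i<n. w i * phi i a) < t)"
  and eq1: "\<forall>i<n. (\<Sum>a\<in>A. of_bool (g a) * phi i a) = (\<Sum>a\<in>A. of_bool (h a) * phi i a)"
  and eq0: "(\<Sum>a\<in>A. of_bool (g a) :: real) = (\<Sum>a\<in>A. of_bool (h a))"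
  and a: "a \<in> A" and ga: "g a"
  shows "h a"
proof (rule ccontr)
  assume nh: "\<not> h a"
  define d where "d b = (of_bool (g b) - of_bool (h b) :: real)" for b
  define F where "F b = d b * ((\<Sum>i<n. w i * phi i b) - t)" for b
  have "(\<Sum>b\<in>A. F b) = (\<Sum>b\<in>A. (\<Sum>i<n. w i * (d b * phi i b))) - t * (\<Sum>b\<in>A. d b)"
    unfolding F_def by (simp add: right_diff_distrib sum_subtractf sum_distrib_left sum_distrib_right algebra_simps)
  also have "\<dots> = (\<Sum>i<n. w i * (\<Sum>b\<in>A. d b * phi i b)) - t * (\<Sum>b\<in>A. d b)"
    by (subst sum.swap) (simp add: sum_distrib_left)
  also have "(\<Sum>b\<in>A. d b) = 0" using eq0 by (simp add: d_def sum_subtractf)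
  also have "\<And>i. i < n \<Longrightarrow> (\<Sum>b\<in>A. d b * phi i b) = 0"
    using eq1 by (simp add: d_def left_diff_distrib sum_subtractf)
  hence "(\<Sum>i<n. w i * (\<Sum>b\<in>A. d b * phi i b)) = 0" by simp
  finally have s0: "(\<Sum>b\<in>A. F b) = 0" by simp
  have np: "\<And>b. b \<in> A \<Longrightarrow> F b \<le> 0"
    using g unfolding F_def d_def by (auto simp: not_less)
  have "(\<Sum>b\<in>A. - F b) = 0" using s0 by (simp add: sum_negf)
  hence "\<forall>b\<in>A. - F b = 0" using sum_nonneg_eq_0_iff[OF fin, of "\<lambda>b. - F b"] np by force
  hence "F a = 0" using a by auto
  moreover have "F a < 0" using g a ga nh unfolding F_def d_def by auto
  ultimately show False by simp
qed

lemma chow_abstract: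
  fixes A :: "'a set" and phi :: "nat \<Rightarrow> 'a \<Rightarrow> real"
  assumes fin: "finite A"
  and g: "\<forall>a\<in>A. g a = ((\<Sum>i<n. w i * phi i a) < t)"
  and h: "\<forall>a\<in>A. h a = ((\<Sum>i<n. v i * phi i a) < u)"
  and eq1: "\<forall>i<n. (\<Sum>a\<in>A. of_bool (g a) * phi i a) = (\<Sum>a\<in>A. of_bool (h a) * phi i a)"
  and eq0: "(\<Sum>a\<in>A. of_bool (g a) :: real) = (\<Sum>a\<in>A. of_bool (h a))"
  and a: "a \<in> A"
  shows "g a = h a"
  using chow_half[OF fin g eq1 eq0 a]  chow_half[OF fin h _ eq0[symmetric] a] eq1 by (metis (no_types, lifting))

definition thr :: "nat \<Rightarrow> (bool list \<Rightarrow> bool) \<Rightarrow> bool" where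
  "thr n g \<longleftrightarrow> (\<exists>w t. \<forall>a\<in>cube n. g a = ((\<Sum>i<n. w i * of_bool (a!i)) < (t::real)))"

definition chow :: "nat \<Rightarrow> (bool list \<Rightarrow> bool) \<Rightarrow> nat \<Rightarrow> nat" where
  "chow n g = (\<lambda>i. if i < n then card {a\<in>cube n. g a \<and> a!i}
       else if i = n then card {a\<in>cube n. g a} else undefined)"

definition thr_of :: "nat \<Rightarrow> (nat \<Rightarrow> nat) \<Rightarrow> bool list \<Rightarrow> bool" where
  "thr_of n c = (SOME g. thr n g \<and> chow n g = c)"

lemma sum_bool_card: "finite A \<Longrightarrow> (\<Sum>a\<in>A. of_bool (P a) :: real) = real (card {a\<in>A. P a})"
proof -
  assume f: "finite A"
  have "{a\<in>A. P a} = A \<inter> Collect P" by auto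
  thus ?thesis using f by (simp add: of_bool_def sum.If_cases)
qed

lemma chow_inj:
  assumes "thr n g" "thr n h" "chow n g = chow n h" "a \<in> cube n"
  shows "g a = h a"
proof -
  obtain w t where g: "\<forall>a\<in>cube n. g a = ((\<Sum>i<n. w i * of_bool (a!i)) < (t::real))"
    using assms(1) unfolding thr_def by blast
  obtain v u where h: "\<forall>a\<in>cube n. h a = ((\<Sum>i<n. v i * of_bool (a!i)) < (u::real))"
    using assms(2) unfolding thr_def by blast
  have e1: "\<forall>i<n. (\<Sum>a\<in>cube n. of_bool (g a) * of_bool (a!i)) = (\<Sum>a\<in>cube n. of_bool (h a) * (of_bool (a!i)::real))"
  proof (intro allI impI)
    fix i assume i: "i < n"
    have "card {a\<in>cube n. g a \<and> a!i} = card {a\<in>cube n. h a \<and> a!i}"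
      using fun_cong[OF assms(3), of i] i by (simp add: chow_def)
    thus "(\<Sum>a\<in>cube n. of_bool (g a) * of_bool (a!i)) = (\<Sum>a\<in>cube n. of_bool (h a) * (of_bool (a!i)::real))"
      using sum_bool_card[OF cube_finite, of "\<lambda>a. g a \<and> a!i" n] sum_bool_card[OF cube_finite, of "\<lambda>a. h a \<and> a!i" n]
      by (simp add: of_bool_conj)
  qed
  have e0: "(\<Sum>a\<in>cube n. of_bool (g a) :: real) = (\<Sum>a\<in>cube n. of_bool (h a))"
    using fun_cong[OF assms(3), of n] sum_bool_card[OF cube_finite, of g n] sum_bool_card[OF cube_finite, of h n]
    by (simp add: chow_def)
  show ?thesis by (rule chow_abstract[OF cube_finite g h e1 e0 assms(4)])
qed

lemma thr_of_chow: "thr n g \<Longrightarrow> a \<in> cube n \<Longrightarrow> thr_of n (chow n g) a = g a"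
proof -
  assume t: "thr n g" and a: "a \<in> cube n"
  have "\<exists>g'. thr n g' \<and> chow n g' = chow n g" using t by blast
  hence "thr n (thr_of n (chow n g)) \<and> chow n (thr_of n (chow n g)) = chow n g"
    unfolding thr_of_def by (rule someI_ex)
  thus ?thesis using chow_inj t a by blast
qed

lemma chow_in: "chow n g \<in> {..n} \<rightarrow>\<^sub>E {..(2::nat)^n}"
proof -
  have "\<And>P. card {a\<in>cube n. P a} \<le> 2^n"
    using card_mono[OF cube_finite] card_cube by (metis (no_types, lifting) mem_Collect_eq subsetI)
  thus ?thesis by (auto simp: chow_def PiE_def extensional_def)
qed

lemma embed_nth: "i < length a \<Longrightarrow> embed a ! i = of_bool (a!i)"
  by (simp add: embed_def)

lemma thr_edist:
  fixes p q :: "real list"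
  shows "thr n (\<lambda>a. edist n (embed a) p < edist n (embed a) q)"
proof -
  have "\<forall>a\<in>cube n. (edist n (embed a) p < edist n (embed a) q) =
     ((\<Sum>i<n. (2 * (q!i - p!i)) * of_bool (a!i)) < (\<Sum>i<n. (q!i)^2 - (p!i)^2))"
  proof
    fix a assume a: "a \<in> cube n"
    hence len: "length a = n" by (simp add: cube_def)
    have "(edist n (embed a) p < edist n (embed a) q) =
       ((\<Sum>i<n. (of_bool (a!i) - p!i)^2) < (\<Sum>i<n. (of_bool (a!i) - q!i)^2))"
      unfolding edist_def using len by (simp add: embed_nth)
    also have "\<dots> = ((\<Sum>i<n. (of_bool (a!i) - q!i)^2) - (\<Sum>i<n. (of_bool (a!i) - p!i)^2) > 0)" by simp
    also have "(\<Sum>i<n. (of_bool (a!i) - q!i)^2) - (\<Sum>i<n. (of_bool (a!i) - p!i)^2)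
       = (\<Sum>i<n. (q!i)^2 - (p!i)^2) - (\<Sum>i<n. (2 * (q!i - p!i)) * of_bool (a!i))"
      by (simp add: sum_subtractf[symmetric] power2_eq_square algebra_simps)
    finally show "(edist n (embed a) p < edist n (embed a) q) =
     ((\<Sum>i<n. (2 * (q!i - p!i)) * of_bool (a!i)) < (\<Sum>i<n. (q!i)^2 - (p!i)^2))" by simp
  qed
  thus ?thesis unfolding thr_def
    by (intro exI[where x="\<lambda>i. 2 * (q!i - p!i)"] exI[where x="\<Sum>i<n. (q!i)^2 - (p!i)^2"])
qed

definition pt :: "nat \<Rightarrow> bool list \<Rightarrow> nat \<Rightarrow> real list" where
  "pt k a j = (of_bool (hd a) + real j / (3 * real k)) # embed (tl a)"

lemma edist_Cons: "edist (Suc m) (x#xs) (y#ys) = sqrt ((x-y)^2 + (\<Sum>i<m. (xs!i - ys!i)^2))"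
  by (simp add: edist_def sum.lessThan_Suc_shift del: sum.lessThan_Suc)

lemma cube_Suc: "a \<in> cube (Suc m) \<Longrightarrow> a = hd a # tl a \<and> tl a \<in> cube m"
  by (cases a) (auto simp: cube_def)

lemma embed_Cons: "embed (x#c) = of_bool x # embed c"
  by (simp add: embed_def)

lemma embed_inj: "embed c = embed e \<Longrightarrow> c = e"
  unfolding embed_def by (simp add: inj_map_eq_map inj_def)

lemma Dsum_same: "(\<Sum>i<m. (embed c!i - embed c!i)^2) = (0::real)" by simp

lemma Dsum_ge:
  assumes "c \<in> cube m" "e \<in> cube m" "c \<noteq> e"
  shows "1 \<le> (\<Sum>i<m. (embed c!i - embed e!i)^2)"
proof -
  have len: "length c = m" "length e = m" using assms by (auto simp: cube_def)
  obtain i where i: "i < m" "c!i \<noteq> e!i" using assms(3) len by (auto simp: list_eq_iff_nth_eq)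
  have "1 = (embed c!i - embed e!i)^2" using i len by (cases "c!i"; cases "e!i") (auto simp: embed_nth)
  also have "\<dots> \<le> (\<Sum>i<m. (embed c!i - embed e!i)^2)"
    by (rule member_le_sum) (use i in auto)
  finally show ?thesis .
qed

lemma pt_sep:
  assumes a: "a \<in> cube (Suc m)" and b: "b \<in> cube (Suc m)" and j: "j < k" and j': "j' < k" and ne: "b \<noteq> a"
  shows "edist (Suc m) (embed a) (pt k a j) < edist (Suc m) (embed a) (pt k b j')"
proof -
  obtain x c where ea: "a = x # c" "c \<in> cube m" using a by (cases a) (auto simp: cube_def)
  obtain y e where eb: "b = y # e" "e \<in> cube m" using b by (cases b) (auto simp: cube_def)
  define d where "d = real j / (3 * real k)"
  define d' where "d' = real j' / (3 * real k)"
  have k: "real k > 0" using j by simp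
  have d: "0 \<le> d" "d < 1/3" using j k by (auto simp: d_def field_simps)
  have d': "0 \<le> d'" "d' < 1/3" using j' k by (auto simp: d'_def field_simps)
  have L: "edist (Suc m) (embed a) (pt k a j) = sqrt (d^2)"
    unfolding ea pt_def embed_Cons edist_Cons d_def by simp
  have R: "edist (Suc m) (embed a) (pt k b j') = sqrt ((of_bool x - (of_bool y + d'))^2 + (\<Sum>i<m. (embed c!i - embed e!i)^2))"
    unfolding ea eb pt_def embed_Cons edist_Cons d'_def by simp
  have sq: "d^2 < 1/9" using power_strict_mono[of d "1/3" 2] d by (simp add: power_divide)
  have "1/9 \<le> (of_bool x - (of_bool y + d'))^2 + (\<Sum>i<m. (embed c!i - embed e!i)^2)"
  proof (cases "c = e")
    case True
    hence "x \<noteq> y" using ne ea eb by auto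
    hence "4/9 \<le> (of_bool x - (of_bool y + d'))^2"
    proof -
      have "2/3 \<le> \<bar>of_bool x - (of_bool y + d')\<bar>" using \<open>x \<noteq> y\<close> d' by (cases x; cases y) auto
      hence "\<bar>2/3\<bar> \<le> \<bar>of_bool x - (of_bool y + d')\<bar>" by simp
      hence "(2/3)^2 \<le> (of_bool x - (of_bool y + d'))^2" using abs_le_square_iff by blast
      thus ?thesis by (simp add: power_divide)
    qed
    moreover have "0 \<le> (\<Sum>i<m. (embed c!i - embed e!i)^2)" by (simp add: sum_nonneg)
    ultimately show ?thesis by linarith
  next
    case False
    hence "1 \<le> (\<Sum>i<m. (embed c!i - embed e!i)^2)" using Dsum_ge ea eb by blast
    moreover have "0 \<le> (of_bool x - (of_bool y + d'))^2" by simp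
    ultimately show ?thesis by linarith
  qed
  hence "d^2 < (of_bool x - (of_bool y + d'))^2 + (\<Sum>i<m. (embed c!i - embed e!i)^2)"
    using sq by linarith
  thus ?thesis unfolding L R by (rule real_sqrt_less_mono)
qed

lemma pt_inj:
  assumes a: "a \<in> cube (Suc m)" and b: "b \<in> cube (Suc m)" and j: "j < k" and j': "j' < k"
    and eq: "pt k a j = pt k b j'"
  shows "a = b \<and> j = j'"
proof -
  have k: "real k > 0" using j by simp
  have t: "tl a = tl b" using eq embed_inj by (simp add: pt_def)
  have h: "of_bool (hd a) + real j / (3 * real k) = of_bool (hd b) + real j' / (3 * real k)"
    using eq by (simp add: pt_def)
  have d: "real j / (3 * real k) < 1/3" "real j' / (3 * real k) < 1/3" using j j' k by (auto simp: field_simps)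
  have hd: "hd a = hd b"
  proof (rule ccontr)
    assume "hd a \<noteq> hd b"
    moreover have "0 \<le> real j/(3*real k)" "0 \<le> real j'/(3*real k)" by simp_all
    ultimately show False using h d by (cases "hd a"; cases "hd b") auto
  qed
  hence "real j / (3 * real k) = real j' / (3 * real k)" using h by simp
  hence "j = j'" using k by (simp add: field_simps)
  moreover have "a = b"
  proof -
    have e1: "a = hd a # tl a" "b = hd b # tl b" using cube_Suc[OF a] cube_Suc[OF b] by blast+
    have "a = hd b # tl b" using e1(1) hd t by simp
    thus "a = b" using e1(2) by simp
  qed
  ultimately show ?thesis by simp
qed

lemma rep_exists:
  assumes n: "0 < n" and k: "0 < k"
  shows "\<exists>P N. knn_rep n k f P N"
proof -
  obtain m where m: "n = Suc m" using n by (cases n) auto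
  define P where "P = (\<lambda>(a,j). pt k a j) ` {(a,j). a \<in> cube n \<and> j < k \<and> f a}"
  define N where "N = (\<lambda>(a,j). pt k a j) ` {(a,j). a \<in> cube n \<and> j < k \<and> \<not> f a}"
  have finS: "finite {(a,j). a \<in> cube n \<and> j < k}"
    by (rule finite_subset[of _ "cube n \<times> {..<k}"]) (auto simp: cube_finite)
  have fP: "finite P" unfolding P_def by (rule finite_imageI, rule finite_subset[OF _ finS]) auto
  have fN: "finite N" unfolding N_def by (rule finite_imageI, rule finite_subset[OF _ finS]) auto
  have disj: "P \<inter> N = {}"
  proof (rule ccontr)
    assume "P \<inter> N \<noteq> {}"
    then obtain a j b j' where "a \<in> cube n" "j < k" "f a" "b \<in> cube n" "j' < k" "\<not> f b" "pt k a j = pt k b j'"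
      unfolding P_def N_def by auto
    thus False using pt_inj[of a m b j k j'] m by auto
  qed
  have len: "\<forall>p \<in> P \<union> N. length p = n" unfolding P_def N_def m
    by (auto simp: pt_def embed_def cube_def)
  have PN: "P \<union> N = (\<lambda>(a,j). pt k a j) ` {(a,j). a \<in> cube n \<and> j < k}"
    unfolding P_def N_def by auto
  have main: "\<exists>K. K \<subseteq> P \<union> N \<and> card K = k \<and>
        (\<forall>p \<in> K. \<forall>q \<in> (P \<union> N) - K. edist n (embed a) p < edist n (embed a) q) \<and>
        (f a \<longleftrightarrow> real (card (K \<inter> P)) \<ge> real k / 2)" if a: "a \<in> cube n" for a
  proof (intro exI conjI)
    let ?K = "pt k a ` {..<k}"
    show "?K \<subseteq> P \<union> N" unfolding PN using a by auto
    have inj: "inj_on (pt k a) {..<k}"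
    proof (rule inj_onI)
      fix j j' assume "j \<in> {..<k}" "j' \<in> {..<k}" "pt k a j = pt k a j'"
      thus "j = j'" using pt_inj[of a m a j k j'] a m by simp
    qed
    show "card ?K = k" using card_image[OF inj] by simp
    show "\<forall>p \<in> ?K. \<forall>q \<in> (P \<union> N) - ?K. edist n (embed a) p < edist n (embed a) q"
    proof (intro ballI)
      fix p q assume p: "p \<in> ?K" and q: "q \<in> (P \<union> N) - ?K"
      obtain j where j: "j < k" "p = pt k a j" using p by auto
      obtain b j' where bj: "b \<in> cube n" "j' < k" "q = pt k b j'" using q unfolding PN by auto
      have "b \<noteq> a" using q bj by auto
      thus "edist n (embed a) p < edist n (embed a) q" using pt_sep a bj j m by simp
    qed
    show "f a \<longleftrightarrow> real (card (?K \<inter> P)) \<ge> real k / 2"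
    proof (cases "f a")
      case True
      hence "?K \<inter> P = ?K" unfolding P_def using a by auto
      thus ?thesis using True card_image[OF inj] by simp
    next
      case False
      have "?K \<inter> P = {}"
      proof (rule ccontr)
        assume "?K \<inter> P \<noteq> {}"
        then obtain j b j' where "j < k" "b \<in> cube n" "j' < k" "f b" "pt k a j = pt k b j'"
          unfolding P_def by auto
        thus False using pt_inj[of a m b j k j'] m a False by auto
      qed
      thus ?thesis using False k by simp
    qed
  qed
  show ?thesis unfolding knn_rep_def
    apply (rule exI[of _ P], rule exI[of _ N])
    apply (intro conjI fP fN disj len ballI)
    by (rule main)
qed

definition Pairs :: "nat \<Rightarrow> (nat \<times> nat) set" where "Pairs s = {(i,j). i < j \<and> j < s}"
definition CH :: "nat \<Rightarrow> (nat \<Rightarrow> nat) set" where "CH n = {..n} \<rightarrow>\<^sub>E {..(2::nat)^n}"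
definition DS :: "nat \<Rightarrow> nat \<Rightarrow> (nat \<times> nat \<times> nat set \<times> (nat \<times> nat \<Rightarrow> nat \<Rightarrow> nat)) set" where
  "DS n M = (SIGMA s:{..M}. SIGMA k:{..s}. Pow {..<s} \<times> (Pairs s \<rightarrow>\<^sub>E CH n))"
definition Rel :: "nat \<Rightarrow> (nat \<times> nat \<Rightarrow> nat \<Rightarrow> nat) \<Rightarrow> bool list \<Rightarrow> nat \<Rightarrow> nat \<Rightarrow> bool" where
  "Rel n C a i j = (if i < j then thr_of n (C (i,j)) a else \<not> thr_of n (C (j,i)) a)"
definition Phi :: "nat \<Rightarrow> (nat \<times> nat \<times> nat set \<times> (nat \<times> nat \<Rightarrow> nat \<Rightarrow> nat)) \<Rightarrow> bool list \<Rightarrow> bool" where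
  "Phi n D = (case D of (s,k,L,C) \<Rightarrow> restrict (\<lambda>a. \<exists>K \<subseteq> {..<s}. card K = k \<and>
      (\<forall>i\<in>K. \<forall>j\<in>{..<s}-K. Rel n C a i j) \<and> real k / 2 \<le> real (card (K \<inter> L))) (cube n))"

lemma encode:
  assumes rep: "knn_rep n k f P N" and f: "f \<in> cube n \<rightarrow>\<^sub>E (UNIV::bool set)" and sM: "card (P \<union> N) \<le> M"
  shows "f \<in> Phi n ` DS n M"
proof -
  have fin: "finite (P \<union> N)" using rep by (simp add: knn_rep_def)
  obtain ps where ps: "set ps = P \<union> N" "distinct ps" using finite_distinct_list[OF fin] by blast
  define s where "s = length ps"
  have scard: "s = card (P \<union> N)" using ps distinct_card s_def by metis
  define L where "L = {i. i < s \<and> ps!i \<in> P}"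
  define g where "g i j = (\<lambda>a. edist n (embed a) (ps!i) < edist n (embed a) (ps!j))" for i j
  define C where "C = restrict (\<lambda>(i,j). chow n (g i j)) (Pairs s)"
  have injps: "inj_on (nth ps) {..<s}" using inj_on_nth[OF ps(2)] s_def by simp
  have a0: "replicate n False \<in> cube n" by (simp add: cube_def)
  have R: "\<forall>a \<in> cube n. \<exists>K. K \<subseteq> P \<union> N \<and> card K = k \<and>
        (\<forall>p \<in> K. \<forall>q \<in> (P \<union> N) - K. edist n (embed a) p < edist n (embed a) q) \<and>
        (f a \<longleftrightarrow> real (card (K \<inter> P)) \<ge> real k / 2)"
    using rep unfolding knn_rep_def by (elim conjE) assumption
  obtain K00 where "K00 \<subseteq> P \<union> N" "card K00 = k" using R[rule_format, OF a0] by blast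
  hence ks: "k \<le> s" using scard card_mono[OF fin] by metis
  have D: "(s,k,L,C) \<in> DS n M"
    unfolding DS_def using sM scard ks chow_in
    by (auto simp: L_def C_def CH_def)
  have Rel: "Rel n C a i j = (if i < j then g i j a else \<not> g j i a)"
    if a: "a \<in> cube n" and ij: "i < s" "j < s" "i \<noteq> j" for a i j
  proof (cases "i < j")
    case True
    hence "C (i,j) = chow n (g i j)" using ij by (simp add: C_def Pairs_def)
    thus ?thesis using True thr_of_chow[OF _ a] thr_edist unfolding Rel_def g_def by simp
  next
    case False
    hence "j < i" using ij by simp
    hence "C (j,i) = chow n (g j i)" using ij by (simp add: C_def Pairs_def)
    thus ?thesis using False thr_of_chow[OF _ a] thr_edist unfolding Rel_def g_def by simp
  qed
  have pt: "Phi n (s,k,L,C) a = f a" for a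
  proof (cases "a \<in> cube n")
    case False
    have "Phi n (s,k,L,C) a = undefined"
      unfolding Phi_def prod.case restrict_def by (rule if_not_P[OF False])
    thus ?thesis using PiE_arb[OF f False] by simp
  next
    case True
    note a = True
    obtain K0 where K0: "K0 \<subseteq> P \<union> N" "card K0 = k"
      "\<forall>p \<in> K0. \<forall>q \<in> (P \<union> N) - K0. edist n (embed a) p < edist n (embed a) q"
      "f a \<longleftrightarrow> real (card (K0 \<inter> P)) \<ge> real k / 2"
      using R[rule_format, OF a] by blast
    define I0 where "I0 = {i. i < s \<and> ps!i \<in> K0}"
    have I0s: "I0 \<subseteq> {..<s}" by (auto simp: I0_def)
    have imI0: "nth ps ` I0 = K0"
    proof
      show "nth ps ` I0 \<subseteq> K0" by (auto simp: I0_def)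
      show "K0 \<subseteq> nth ps ` I0"
      proof
        fix p assume p: "p \<in> K0"
        then obtain i where "i < s" "ps!i = p" using K0(1) ps(1) s_def by (metis in_set_conv_nth subsetD)
        thus "p \<in> nth ps ` I0" using p by (auto simp: I0_def)
      qed
    qed
    have cI0: "card I0 = k"
      using card_image[OF inj_on_subset[OF injps I0s]] imI0 K0(2) by simp
    have imL: "nth ps ` (I0 \<inter> L) = K0 \<inter> P"
    proof
      show "nth ps ` (I0 \<inter> L) \<subseteq> K0 \<inter> P" by (auto simp: I0_def L_def)
      show "K0 \<inter> P \<subseteq> nth ps ` (I0 \<inter> L)"
      proof
        fix p assume p: "p \<in> K0 \<inter> P"
        then obtain i where "i \<in> I0" "ps!i = p" using imI0 by blast
        thus "p \<in> nth ps ` (I0 \<inter> L)" using p by (auto simp: I0_def L_def)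
      qed
    qed
    have cL: "card (I0 \<inter> L) = card (K0 \<inter> P)"
    proof -
      have "I0 \<inter> L \<subseteq> {..<s}" using I0s by auto
      thus ?thesis using card_image[OF inj_on_subset[OF injps], of "I0 \<inter> L"] imL by simp
    qed
    have sepI: "g i j a" if "i \<in> I0" "j < s" "j \<notin> I0" for i j
    proof -
      have "ps!i \<in> K0" using that by (simp add: I0_def)
      moreover have "ps!j \<in> (P \<union> N) - K0" using that ps(1) s_def by (auto simp: I0_def)
      ultimately show ?thesis using K0(3) by (simp add: g_def)
    qed
    have relI0: "\<forall>i\<in>I0. \<forall>j\<in>{..<s}-I0. Rel n C a i j"
    proof (intro ballI)
      fix i j assume i: "i \<in> I0" and j: "j \<in> {..<s}-I0"
      have ij: "i < s" "j < s" "i \<noteq> j" using i j I0s by auto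
      have "g i j a" using sepI i j by auto
      hence "\<not> g j i a" by (simp add: g_def)
      thus "Rel n C a i j" using Rel[OF a ij] \<open>g i j a\<close> by simp
    qed
    have uniq: "K = I0" if K: "K \<subseteq> {..<s}" "card K = k" "\<forall>i\<in>K. \<forall>j\<in>{..<s}-K. Rel n C a i j" for K
    proof (rule ccontr)
      assume ne: "K \<noteq> I0"
      have fK: "finite K" "finite I0" using K(1) I0s finite_subset by blast+
      have "\<not> K \<subseteq> I0"
      proof
        assume "K \<subseteq> I0"
        hence "K = I0" using card_seteq[OF fK(2), of K] K(2) cI0 by simp
        thus False using ne by simp
      qed
      then obtain i where i: "i \<in> K" "i \<notin> I0" by blast
      have "\<not> I0 \<subseteq> K"
      proof
        assume "I0 \<subseteq> K"
        hence "I0 = K" using card_seteq[OF fK(1), of I0] K(2) cI0 by simp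
        thus False using ne by simp
      qed
      then obtain j where j: "j \<in> I0" "j \<notin> K" by blast
      have ij: "i < s" "j < s" "i \<noteq> j" using i j K(1) I0s by auto
      have gji: "g j i a" using sepI[OF j(1) ij(1) i(2)] .
      have "Rel n C a i j" using K(3) i j ij by auto
      hence "if i < j then g i j a else \<not> g j i a" using Rel[OF a ij] by simp
      moreover have "\<not> g i j a" using gji by (simp add: g_def)
      ultimately show False using gji by (auto split: if_splits)
    qed
    have "Phi n (s,k,L,C) a = (\<exists>K \<subseteq> {..<s}. card K = k \<and>
      (\<forall>i\<in>K. \<forall>j\<in>{..<s}-K. Rel n C a i j) \<and> real k / 2 \<le> real (card (K \<inter> L)))"
      unfolding Phi_def prod.case restrict_def by (rule if_P[OF a])
    also have "\<dots> = (real k / 2 \<le> real (card (I0 \<inter> L)))"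
    proof
      assume "\<exists>K \<subseteq> {..<s}. card K = k \<and>
        (\<forall>i\<in>K. \<forall>j\<in>{..<s}-K. Rel n C a i j) \<and> real k / 2 \<le> real (card (K \<inter> L))"
      then obtain K where "K \<subseteq> {..<s}" "card K = k" "\<forall>i\<in>K. \<forall>j\<in>{..<s}-K. Rel n C a i j"
        "real k / 2 \<le> real (card (K \<inter> L))" by blast
      thus "real k / 2 \<le> real (card (I0 \<inter> L))" using uniq by metis
    next
      assume "real k / 2 \<le> real (card (I0 \<inter> L))"
      thus "\<exists>K \<subseteq> {..<s}. card K = k \<and>
        (\<forall>i\<in>K. \<forall>j\<in>{..<s}-K. Rel n C a i j) \<and> real k / 2 \<le> real (card (K \<inter> L))"
        using I0s cI0 relI0 by blast
    qed
    also have "\<dots> = f a" using cL K0(4) by simp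
    finally show ?thesis .
  qed
  have "f = Phi n (s,k,L,C)" using pt by auto
  thus ?thesis using D by blast
qed

lemma Pairs_sub: "Pairs s \<subseteq> {..<s} \<times> {..<s}" by (auto simp: Pairs_def)
lemma finite_Pairs: "finite (Pairs s)" by (rule finite_subset[OF Pairs_sub]) simp

lemma card_Pairs2: "2 * card (Pairs s) \<le> s^2"
proof -
  have inj: "inj_on prod.swap (Pairs s)" by (auto simp: inj_on_def)
  have d: "Pairs s \<inter> prod.swap ` Pairs s = {}" by (auto simp: Pairs_def)
  have sub: "Pairs s \<union> prod.swap ` Pairs s \<subseteq> {..<s} \<times> {..<s}" by (auto simp: Pairs_def)
  have "card (Pairs s \<union> prod.swap ` Pairs s) = 2 * card (Pairs s)"
    using card_Un_disjoint[OF finite_Pairs finite_imageI[OF finite_Pairs] d] card_image[OF inj] by simp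
  moreover have "card (Pairs s \<union> prod.swap ` Pairs s) \<le> s^2"
    using card_mono[OF _ sub] by (simp add: power2_eq_square)
  ultimately show ?thesis by simp
qed

lemma Pairs_mono: "s \<le> M \<Longrightarrow> card (Pairs s) \<le> card (Pairs M)"
  by (rule card_mono[OF finite_Pairs]) (auto simp: Pairs_def)

lemma finite_CH: "finite (CH n)" unfolding CH_def by (rule finite_PiE) auto

lemma card_CH: "card (CH n) = (2^n+1)^(n+1)"
  unfolding CH_def by (simp add: card_PiE)

lemma card_DS: "card (DS n M) \<le> (M+1)*(M+1)*(2^M * card (CH n)^card (Pairs M))"
proof -
  let ?Q = "card (CH n)"
  have Q1: "1 \<le> ?Q" unfolding card_CH by (rule one_le_power) simp
  have fin: "\<And>s. finite (Pow {..<s} \<times> (Pairs s \<rightarrow>\<^sub>E CH n))"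
    by (intro finite_cartesian_product finite_PiE finite_Pairs finite_CH) auto
  have cs: "\<And>s. card (Pow {..<s} \<times> (Pairs s \<rightarrow>\<^sub>E CH n)) = 2^s * ?Q^card (Pairs s)"
    by (simp add: card_cartesian_product card_Pow card_PiE finite_Pairs)
  have "card (DS n M) = (\<Sum>s\<le>M. \<Sum>k\<le>s. 2^s * ?Q^card (Pairs s))"
    unfolding DS_def using fin cs by (simp add: card_SigmaI)
  also have "\<dots> \<le> (\<Sum>s\<le>M. \<Sum>k\<le>s. 2^M * ?Q^card (Pairs M))"
  proof (intro sum_mono)
    fix s k assume "s \<in> {..M}"
    hence "s \<le> M" by simp
    thus "2^s * ?Q^card (Pairs s) \<le> 2^M * ?Q^card (Pairs M)"
      using Pairs_mono[of s M] Q1 by (intro mult_le_mono power_increasing) auto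
  qed
  also have "\<dots> = (\<Sum>s\<le>M. (s+1) * (2^M * ?Q^card (Pairs M)))" by simp
  also have "\<dots> \<le> (\<Sum>s\<le>M. (M+1) * (2^M * ?Q^card (Pairs M)))"
    by (intro sum_mono mult_le_mono) auto
  also have "\<dots> = (M+1)*(M+1)*(2^M * ?Q^card (Pairs M))" by (simp only: sum_constant card_atMost) (simp add: algebra_simps)
  finally show ?thesis .
qed

lemma exp_ineq:
  fixes n M :: nat
  assumes n: "12 \<le> n" and nm: "n^2 * M^2 \<le> 2^n"
  shows "6*M + (n+1)^2 * M^2 + n \<le> 2 * 2^n"
proof -
  have MM: "M \<le> M^2" by (cases M) (auto simp: power2_eq_square)
  have e1: "(n+1)^2 * M^2 = n^2*M^2 + (2*n+1)*M^2" by (simp add: power2_eq_square algebra_simps)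
  have "4*(2*n+7) \<le> n^2"
  proof -
    have "4*(2*n+7) \<le> 12 * n" using n by simp
    also have "\<dots> \<le> n * n" using n by simp
    finally show ?thesis by (simp add: power2_eq_square)
  qed
  hence "4*(2*n+7)*M^2 \<le> n^2 * M^2" by simp
  hence a: "4*((2*n+7)*M^2) \<le> 2^n" using nm by linarith
  have b: "2*n \<le> 2^n" using less_exp[of n] by (induct n) auto
  have "6*M + (n+1)^2 * M^2 + n \<le> 6*M^2 + n^2*M^2 + (2*n+1)*M^2 + n" using MM e1 by simp
  also have "\<dots> = n^2*M^2 + (2*n+7)*M^2 + n" by (simp add: algebra_simps)
  finally show ?thesis using a b nm by linarith
qed

lemma aux_sq: "((A::nat)*A*(B * C))^2 = (A^2)^2 * B^2 * C^2"
  by (simp add: power_mult_distrib power2_eq_square[of A])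

lemma X_bound:
  assumes n: "12 \<le> n" and nm: "n^2 * M^2 \<le> 2^n"
  shows "(card (DS n M))^2 * 2^n \<le> (2^(2^n))^2"
proof -
  let ?Q = "card (CH n)" and ?p = "card (Pairs M)"
  have Q1: "1 \<le> ?Q" unfolding card_CH by (rule one_le_power) simp
  have "(card (DS n M))^2 \<le> ((M+1)*(M+1)*(2^M * ?Q^?p))^2"
    by (rule power_mono[OF card_DS]) simp
  also have "\<dots> = ((M+1)^2)^2 * (2^M)^2 * (?Q^?p)^2" by (rule aux_sq)
  also have "\<dots> = (M+1)^4 * 2^(2*M) * ?Q^(2*?p)"
    by (simp add: power_mult[symmetric] mult.commute)
  also have "\<dots> \<le> (2^M)^4 * 2^(2*M) * ?Q^(M^2)"
  proof (intro mult_le_mono power_mono power_increasing)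
    show "M+1 \<le> 2^M" using less_exp[of M] by (simp add: Suc_le_eq)
    show "2*?p \<le> M^2" by (rule card_Pairs2)
  qed (use Q1 in auto)
  also have "?Q^(M^2) \<le> (2^((n+1)*(n+1)))^(M^2)"
  proof (rule power_mono)
    have "2^n + 1 \<le> (2::nat)^(n+1)" by simp
    hence "?Q \<le> (2^(n+1))^(n+1)" unfolding card_CH by (rule power_mono) simp
    thus "?Q \<le> 2^((n+1)*(n+1))" by (simp only: power_mult)
  qed simp
  hence "(2^M)^4 * 2^(2*M) * ?Q^(M^2) \<le> (2^M)^4 * 2^(2*M) * (2^((n+1)*(n+1)))^(M^2)" by simp
  also have "\<dots> = 2^(6*M + (n+1)^2 * M^2)"
    by (simp add: power_mult[symmetric] power_add[symmetric] power2_eq_square algebra_simps)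
  finally have "(card (DS n M))^2 * 2^n \<le> 2^(6*M + (n+1)^2 * M^2) * 2^n" by simp
  also have "\<dots> = 2^(6*M + (n+1)^2 * M^2 + n)" by (simp add: power_add)
  also have "\<dots> \<le> 2^(2*2^n)" by (rule power_increasing[OF exp_ineq[OF n nm]]) simp
  also have "\<dots> = (2^(2^n))^2" by (simp add: power_mult[symmetric] mult.commute)
  finally show ?thesis .
qed

lemma sq_le_exp: "4 \<le> n \<Longrightarrow> n^2 \<le> (2::nat)^n"
proof (induction n rule: nat_induct_at_least)
  case base thus ?case by simp
next
  case (Suc n)
  have "4*n \<le> n*n" using Suc(1) by simp
  hence "2*n+1 \<le> n*n" using Suc(1) by linarith
  hence "(Suc n)^2 \<le> n^2 + n^2" by (simp add: power2_eq_square)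
  also have "\<dots> \<le> 2^Suc n" using Suc(2) by simp
  finally show ?case .
qed

definition Bn :: "nat \<Rightarrow> real" where "Bn n = 2 powr (real n / 2) / real n"
definition Mn :: "nat \<Rightarrow> nat" where "Mn n = nat \<lfloor>Bn n\<rfloor>"
definition bad :: "nat \<Rightarrow> (bool list \<Rightarrow> bool) set" where
  "bad n = {f \<in> cube n \<rightarrow>\<^sub>E (UNIV :: bool set). \<not> (\<forall>k>0. real (knn n k f) > Bn n)}"

lemma M_bound:
  assumes n: "0 < n" shows "n^2 * (Mn n)^2 \<le> 2^n"
proof -
  have B0: "0 \<le> Bn n" unfolding Bn_def by simp
  have "real (Mn n) \<le> Bn n" unfolding Mn_def using of_nat_floor[OF B0] .
  hence "real n * real (Mn n) \<le> real n * Bn n" by (simp add: mult_left_mono)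
  also have "real n * Bn n = 2 powr (real n / 2)" using n unfolding Bn_def by simp
  finally have le: "real n * real (Mn n) \<le> 2 powr (real n / 2)" .
  have "(real n * real (Mn n))^2 \<le> (2 powr (real n / 2))^2"
    by (rule power_mono[OF le]) simp
  also have "(2 powr (real n / 2))^2 = 2 powr (real n / 2 + real n / 2)"
    by (simp add: power2_eq_square flip: powr_add)
  also have "\<dots> = 2 ^ n" by (simp add: powr_realpow)
  finally have "real (n^2 * (Mn n)^2) \<le> real (2^n)" by (simp add: power_mult_distrib)
  thus ?thesis by (simp only: of_nat_le_iff)
qed

lemma finite_DS: "finite (DS n M)"
  unfolding DS_def by (intro finite_SigmaI finite_cartesian_product finite_PiE finite_Pairs finite_CH) auto

lemma bad_sub:
  assumes n: "0 < n" shows "bad n \<subseteq> Phi n ` DS n (Mn n)"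
proof
  fix f assume "f \<in> bad n"
  then obtain k where f: "f \<in> cube n \<rightarrow>\<^sub>E (UNIV :: bool set)" and k: "0 < k" and le: "real (knn n k f) \<le> Bn n"
    unfolding bad_def by auto
  obtain P0 N0 where "knn_rep n k f P0 N0" using rep_exists[OF n k] by blast
  hence "\<exists>s P N. knn_rep n k f P N \<and> card (P \<union> N) = s" by blast
  hence "\<exists>P N. knn_rep n k f P N \<and> card (P \<union> N) = knn n k f"
    unfolding knn_def by (rule LeastI_ex)
  then obtain P N where PN: "knn_rep n k f P N" "card (P \<union> N) = knn n k f" by blast
  have "card (P \<union> N) \<le> Mn n" unfolding Mn_def using PN(2) le by (simp add: le_nat_floor)
  thus "f \<in> Phi n ` DS n (Mn n)" by (rule encode[OF PN(1) f])
qed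

lemma ratio:
  assumes n: "12 \<le> n"
  shows "real (card (bad n)) / 2^(2^n) \<le> 1 / real n"
proof -
  let ?T = "(2::nat)^(2^n)"
  have cb: "card (bad n) \<le> card (DS n (Mn n))"
  proof -
    have n0: "0 < n" using n by simp
    have "card (bad n) \<le> card (Phi n ` DS n (Mn n))"
      by (rule card_mono[OF finite_imageI[OF finite_DS] bad_sub[OF n0]])
    also have "\<dots> \<le> card (DS n (Mn n))" by (rule card_image_le[OF finite_DS])
    finally show ?thesis .
  qed
  have "(card (bad n))^2 * n^2 \<le> (card (DS n (Mn n)))^2 * 2^n"
    using cb sq_le_exp[of n] n by (intro mult_le_mono power_mono) auto
  also have "\<dots> \<le> ?T^2" using X_bound[OF n M_bound] n by simp
  finally have "(card (bad n) * n)^2 \<le> ?T^2" by (simp add: power_mult_distrib)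
  hence "card (bad n) * n \<le> ?T" by (rule power2_le_imp_le) simp
  hence "real (card (bad n)) * real n \<le> 2^(2^n)" by (metis of_nat_le_iff of_nat_mult of_nat_numeral of_nat_power)
  thus ?thesis using n by (simp add: field_simps)
qed

theorem theorem6:
  shows "(\<lambda>n. real (card {f \<in> cube n \<rightarrow>\<^sub>E (UNIV :: bool set).
              \<forall>k>0. real (knn n k f) > 2 powr (real n / 2) / real n})
            / real (card (cube n \<rightarrow>\<^sub>E (UNIV :: bool set))))
         \<longlonglongrightarrow> 1"
proof -
  define r where "r n = real (card (bad n)) / 2^(2^n)" for n
  have eq: "real (card {f \<in> cube n \<rightarrow>\<^sub>E (UNIV :: bool set).
              \<forall>k>0. real (knn n k f) > 2 powr (real n / 2) / real n})
            / real (card (cube n \<rightarrow>\<^sub>E (UNIV :: bool set))) = 1 - r n" for n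
  proof -
    let ?A = "cube n \<rightarrow>\<^sub>E (UNIV :: bool set)"
    have finA: "finite ?A" by (intro finite_PiE cube_finite) auto
    have set: "{f \<in> ?A. \<forall>k>0. real (knn n k f) > 2 powr (real n / 2) / real n} = ?A - bad n"
      unfolding bad_def Bn_def by auto
    have sub: "bad n \<subseteq> ?A" unfolding bad_def by auto
    have c: "card (?A - bad n) = card ?A - card (bad n)" by (rule card_Diff_subset[OF finite_subset[OF sub finA] sub])
    have le: "card (bad n) \<le> card ?A" by (rule card_mono[OF finA sub])
    have "real (card (?A - bad n)) = real (card ?A) - real (card (bad n))" using c le by simp
    thus ?thesis unfolding set r_def card_funs by (simp add: diff_divide_distrib)
  qed
  have "r \<longlonglongrightarrow> 0"
  proof (rule tendsto_sandwich[of "\<lambda>n. 0" r sequentially "\<lambda>n. 1 / real n"])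
    show "\<forall>\<^sub>F n in sequentially. 0 \<le> r n" by (simp add: r_def)
    show "\<forall>\<^sub>F n in sequentially. r n \<le> 1 / real n"
      using eventually_ge_at_top[of "12::nat"] by eventually_elim (simp add: r_def ratio)
    show "(\<lambda>n. 0::real) \<longlonglongrightarrow> 0" by simp
    show "(\<lambda>n. 1 / real n) \<longlonglongrightarrow> 0" by (rule lim_1_over_n)
  qed
  hence "(\<lambda>n. 1 - r n) \<longlonglongrightarrow> 1 - 0" by (intro tendsto_diff tendsto_const)
  thus ?thesis unfolding eq by simp
qed

end
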